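(* The function $F:\Delta^K\to\mathbb{R}^{K+1}$ described in the context is $\lambda(5+\sqrt K)$-Lipschitz continuous with respect to the Euclidean norm, i.e., \[ \|F(x)-F(y)\|\le\lambda(5+\sqrt K)\|x-y\|\qquad\text{for all }x,y\in\Delta^K. \]
   Context: Parameters: integer $K\ge 1$, $\lambda>0$, $\mu\in(0,1]$, $p_1,\dots,p_K\in[0,1]$. $\Delta^K=\{x\in\mathbb{R}^{K+1}:\sum_{k=0}^K x_k=1,\ x_k\ge0\}$ (coordinates indexed from $0$). $F$ is given by $F_0(x)=-\lambda x_0\sum_{k=1}^K(\frac{\mu}{K}+(1-\mu)x_k)p_k$ and, for $k=1,\dots,K$, $F_k(x)=\lambda x_0(\frac{\mu}{K}+(1-\mu)x_k)p_k+\lambda x_k\sum_{k'=1}^K(p_k-p_{k'})x_{k'}$. *)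

theory Defs
  imports "HOL-Analysis.Analysis"
begin

text \<open>Points of R^(K+1) are represented as functions nat => real, coordinates 0..K.\<close>

definition std_simplex_K :: "nat \<Rightarrow> (nat \<Rightarrow> real) set" where
  "std_simplex_K K = {x. (\<Sum>k=0..K. x k) = 1 \<and> (\<forall>k\<in>{0..K}. x k \<ge> 0)}"

definition enorm :: "nat \<Rightarrow> (nat \<Rightarrow> real) \<Rightarrow> real" where
  "enorm K v = sqrt (\<Sum>k=0..K. (v k)^2)"

definition Fmap :: "nat \<Rightarrow> real \<Rightarrow> real \<Rightarrow> (nat \<Rightarrow> real) \<Rightarrow> (nat \<Rightarrow> real) \<Rightarrow> nat \<Rightarrow> real" where
  "Fmap K lam mu p x k =
     (if k = 0 then - lam * x 0 * (\<Sum>j=1..K. (mu / real K + (1 - mu) * x j) * p j)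
      else lam * x 0 * (mu / real K + (1 - mu) * x k) * p k
           + lam * x k * (\<Sum>j=1..K. (p k - p j) * x j))"

end

theory Submission
  imports Defs
begin

lemma L2_abs: "L2_set (\<lambda>k. \<bar>f k\<bar>) A = L2_set f A"
  unfolding L2_set_def by simp

lemma bnd2:
  assumes "\<And>k. k \<in> A \<Longrightarrow> \<bar>v k\<bar> \<le> \<bar>w k\<bar>"
  shows "L2_set v A \<le> L2_set w A"
proof -
  have "L2_set (\<lambda>k. \<bar>v k\<bar>) A \<le> L2_set (\<lambda>k. \<bar>w k\<bar>) A"
    by (rule L2_set_mono) (use assms in auto)
  thus ?thesis by (simp add: L2_abs)
qed

lemma bnd1:
  assumes "\<And>k. k \<in> A \<Longrightarrow> \<bar>v k\<bar> \<le> C * u k" "\<And>k. k \<in> A \<Longrightarrow> 0 \<le> u k"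
    "sum u A \<le> 1" "0 \<le> C"
  shows "L2_set v A \<le> C"
proof -
  have "L2_set v A \<le> L2_set (\<lambda>k. C * u k) A"
    by (rule bnd2) (use assms in \<open>auto simp: abs_mult\<close>)
  also have "\<dots> = C * L2_set u A" using assms(4) by (simp add: L2_set_right_distrib)
  also have "\<dots> \<le> C * sum u A"
    by (rule mult_left_mono[OF L2_set_le_sum]) (use assms in auto)
  also have "\<dots> \<le> C" using assms(3,4) by (simp add: mult_left_le)
  finally show ?thesis .
qed

lemma tri: "L2_set (\<lambda>k. f k + g k) A \<le> L2_set f A + L2_set g A"
  by (rule L2_set_triangle_ineq)

theorem lemma6:
  fixes K :: nat and lam mu :: real and p x y :: "nat \<Rightarrow> real"
  assumes "K \<ge> 1" and "lam > 0" and "0 < mu" and "mu \<le> 1"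
    and "\<forall>k\<in>{1..K}. 0 \<le> p k \<and> p k \<le> 1"
    and "x \<in> std_simplex_K K" and "y \<in> std_simplex_K K"
  shows "enorm K (\<lambda>k. Fmap K lam mu p x k - Fmap K lam mu p y k)
           \<le> lam * (5 + sqrt (real K)) * enorm K (\<lambda>k. x k - y k)"
proof -
  define d where "d = (\<lambda>k. x k - y k)"
  define A where "A = {0..K}"
  define N where "N = L2_set d A"
  define S where "S = (\<Sum>j=1..K. (mu / real K + (1 - mu) * x j) * p j)"
  define P where "P = (\<Sum>j=1..K. p j * d j)"
  define R where "R = (\<lambda>k. \<Sum>j=1..K. (p k - p j) * x j)"
  have xs: "(\<Sum>k=0..K. x k) = 1" "\<And>k. k \<le> K \<Longrightarrow> x k \<ge> 0"
    using assms(6) by (auto simp: std_simplex_K_def)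
  have ys: "(\<Sum>k=0..K. y k) = 1" "\<And>k. k \<le> K \<Longrightarrow> y k \<ge> 0"
    using assms(7) by (auto simp: std_simplex_K_def)
  have split0: "\<And>f::nat\<Rightarrow>real. (\<Sum>k=0..K. f k) = f 0 + (\<Sum>k=1..K. f k)"
    by (simp add: sum.atLeast_Suc_atMost)
  have x1: "(\<Sum>k=1..K. x k) = 1 - x 0" using xs(1) split0[of x] by simp
  have y1: "(\<Sum>k=1..K. y k) = 1 - y 0" using ys(1) split0[of y] by simp
  have d1: "(\<Sum>k=1..K. d k) = - d 0"
    using x1 y1 by (simp add: d_def sum_subtractf)
  have xle: "\<And>k. k \<le> K \<Longrightarrow> x k \<le> 1"
    using xs member_le_sum[of _ "{0..K}" x] by fastforce
  have yle: "\<And>k. k \<le> K \<Longrightarrow> y k \<le> 1"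
    using ys member_le_sum[of _ "{0..K}" y] by fastforce
  have pb: "\<And>k. 1 \<le> k \<Longrightarrow> k \<le> K \<Longrightarrow> 0 \<le> p k \<and> p k \<le> 1" using assms(5) by auto
  have Kpos: "real K > 0" using assms(1) by simp
  have dN: "\<And>k. k \<le> K \<Longrightarrow> \<bar>d k\<bar> \<le> N"
  proof -
    fix k assume "k \<le> K"
    hence "\<bar>d k\<bar> \<le> L2_set (\<lambda>k. \<bar>d k\<bar>) A"
      by (intro member_le_L2_set) (auto simp: A_def)
    thus "\<bar>d k\<bar> \<le> N" by (simp add: L2_abs N_def)
  qed
  have N0: "N \<ge> 0" by (simp add: N_def)
  have "\<bar>P\<bar> \<le> (\<Sum>j=1..K. \<bar>p j\<bar> * \<bar>d j\<bar>)"
    unfolding P_def by (rule order_trans[OF sum_abs]) (simp add: abs_mult)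
  also have "\<dots> \<le> L2_set p {1..K} * L2_set d {1..K}" by (rule L2_set_mult_ineq)
  also have "\<dots> \<le> sqrt (real K) * N"
  proof (rule mult_mono)
    have "L2_set p {1..K} \<le> L2_set (\<lambda>_. 1::real) {1..K}"
      by (rule bnd2) (use pb in auto)
    thus "L2_set p {1..K} \<le> sqrt (real K)" by (simp add: L2_set_constant)
    show "L2_set d {1..K} \<le> N" unfolding N_def L2_set_def A_def
      by (rule real_sqrt_le_mono, rule sum_mono2) auto
  qed auto
  finally have PN: "\<bar>P\<bar> \<le> sqrt (real K) * N" .
  have Sb: "0 \<le> S \<and> S \<le> 1"
  proof -
    have e: "S = (\<Sum>j=1..K. (mu / real K) * p j) + (1 - mu) * (\<Sum>j=1..K. x j * p j)"
      unfolding S_def sum_distrib_left sum.distrib[symmetric] by (rule sum.cong) (auto simp: algebra_simps)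
    have a1: "(\<Sum>j=1..K. (mu / real K) * p j) \<le> (\<Sum>j=1..K. (mu / real K))"
    proof (rule sum_mono)
      fix j assume "j \<in> {1..K}"
      thus "mu / real K * p j \<le> mu / real K"
        using pb[of j] assms(3) Kpos by (intro mult_left_le) auto
    qed
    have b1: "(\<Sum>j=1..K. x j * p j) \<le> (\<Sum>j=1..K. x j)"
      by (rule sum_mono) (use pb xs in \<open>auto intro: mult_left_le\<close>)
    have a0: "0 \<le> (\<Sum>j=1..K. (mu / real K) * p j)"
      by (rule sum_nonneg) (use pb assms in auto)
    have b0: "0 \<le> (\<Sum>j=1..K. x j * p j)"
      by (rule sum_nonneg) (use pb xs in auto)
    have am: "(\<Sum>j=1..K. (mu / real K)) = mu" using Kpos by simp
    have x0: "x 0 \<ge> 0" using xs by auto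
    have b2: "(\<Sum>j=1..K. x j * p j) \<le> 1" using b1 x1 x0 by linarith
    have c1: "(1 - mu) * (\<Sum>j=1..K. x j * p j) \<le> 1 - mu"
      using mult_left_mono[OF b2, of "1 - mu"] assms(4) by simp
    have c0: "0 \<le> (1 - mu) * (\<Sum>j=1..K. x j * p j)"
      using b0 assms(4) by simp
    show ?thesis using e a1 a0 am c1 c0 by linarith
  qed
  have Rb: "\<And>k. 1 \<le> k \<Longrightarrow> k \<le> K \<Longrightarrow> \<bar>R k\<bar> \<le> 1"
  proof -
    fix k assume k: "1 \<le> k" "k \<le> K"
    have "\<bar>R k\<bar> \<le> (\<Sum>j=1..K. \<bar>(p k - p j) * x j\<bar>)" unfolding R_def by (rule sum_abs)
    also have "\<dots> \<le> (\<Sum>j=1..K. x j)"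
    proof (rule sum_mono)
      fix j assume "j \<in> {1..K}"
      hence "\<bar>p k - p j\<bar> \<le> 1" "x j \<ge> 0" using pb[of k] pb[of j] k xs(2)[of j] by auto
      thus "\<bar>(p k - p j) * x j\<bar> \<le> x j" by (simp add: abs_mult mult_left_le_one_le)
    qed
    also have "\<dots> \<le> 1" using x1 xs(2)[of 0] by simp
    finally show "\<bar>R k\<bar> \<le> 1" .
  qed
  define V1 where "V1 = (\<lambda>k::nat. if k = 0 then - d 0 * S else 0)"
  define V2 where "V2 = (\<lambda>k::nat. if k = 0 then 0 else p k * d 0 * (mu / real K + (1 - mu) * x k))"
  define V3 where "V3 = (\<lambda>k::nat. if k = 0 then 0 else p k * y 0 * (1 - mu) * d k)"
  define V4 where "V4 = (\<lambda>k::nat. if k = 0 then 0 else d k * R k)"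
  define V5 where "V5 = (\<lambda>k::nat. if k = 0 then 0 else - y k * p k * d 0)"
  define V6 where "V6 = (\<lambda>k::nat. if k = 0 then - (1 - mu) * y 0 * P else - y k * P)"
  have decomp: "\<And>k. k \<in> A \<Longrightarrow> Fmap K lam mu p x k - Fmap K lam mu p y k
      = lam * (V1 k + V2 k + V3 k + V4 k + V5 k + V6 k)"
  proof -
    fix k assume "k \<in> A"
    show "Fmap K lam mu p x k - Fmap K lam mu p y k
      = lam * (V1 k + V2 k + V3 k + V4 k + V5 k + V6 k)"
    proof (cases "k = 0")
      case True
      have SS: "(\<Sum>j=1..K. (mu / real K + (1 - mu) * y j) * p j) = S - (1 - mu) * P"
        unfolding S_def P_def d_def
        by (simp add: algebra_simps sum_subtractf sum_distrib_left flip: sum.distrib)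
      have fx: "Fmap K lam mu p x k = - lam * x 0 * S" using True by (simp add: Fmap_def S_def)
      have fy: "Fmap K lam mu p y k = - lam * y 0 * (S - (1 - mu) * P)"
        using True by (simp only: Fmap_def SS if_True simp_thms)
      show ?thesis unfolding fx fy using True unfolding V1_def V2_def V3_def V4_def V5_def V6_def
        by (simp add: d_def algebra_simps)
    next
      case False
      have RR: "(\<Sum>j=1..K. (p k - p j) * y j) = R k + p k * d 0 + P"
      proof -
        have "R k - (\<Sum>j=1..K. (p k - p j) * y j) = (\<Sum>j=1..K. (p k - p j) * d j)"
          unfolding R_def d_def by (simp add: algebra_simps sum_subtractf flip: sum.distrib)
        also have "\<dots> = p k * (\<Sum>j=1..K. d j) - P"
          unfolding P_def by (simp add: algebra_simps sum_subtractf sum_distrib_left)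
        finally show ?thesis using d1 by simp
      qed
      have Rx: "(\<Sum>j=1..K. (p k - p j) * x j) = R k" by (simp add: R_def)
      have fx: "Fmap K lam mu p x k = lam * x 0 * (mu / real K + (1 - mu) * x k) * p k
           + lam * x k * R k" using False by (simp only: Fmap_def Rx if_False simp_thms)
      have fy: "Fmap K lam mu p y k = lam * y 0 * (mu / real K + (1 - mu) * y k) * p k
           + lam * y k * (R k + p k * d 0 + P)" using False by (simp only: Fmap_def RR if_False simp_thms)
      show ?thesis unfolding fx fy using False unfolding V1_def V2_def V3_def V4_def V5_def V6_def
        by (simp add: d_def algebra_simps)
    qed
  qed
  have E1: "enorm K (\<lambda>k. Fmap K lam mu p x k - Fmap K lam mu p y k)
      = L2_set (\<lambda>k. lam * (V1 k + V2 k + V3 k + V4 k + V5 k + V6 k)) A"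
    unfolding enorm_def L2_set_def using decomp by (intro arg_cong[where f=sqrt] sum.cong) (auto simp: A_def)
  also have "\<dots> = lam * L2_set (\<lambda>k. V1 k + V2 k + V3 k + V4 k + V5 k + V6 k) A"
    using assms(2) by (simp add: L2_set_right_distrib)
  finally have E2: "enorm K (\<lambda>k. Fmap K lam mu p x k - Fmap K lam mu p y k)
      = lam * L2_set (\<lambda>k. V1 k + V2 k + V3 k + V4 k + V5 k + V6 k) A" .
  have "L2_set (\<lambda>k. V1 k + V2 k + V3 k + V4 k + V5 k + V6 k) A
     \<le> L2_set V1 A + L2_set V2 A + L2_set V3 A + L2_set V4 A + L2_set V5 A + L2_set V6 A"
    using tri[of "\<lambda>k. V1 k + V2 k + V3 k + V4 k + V5 k" V6 A]
      tri[of "\<lambda>k. V1 k + V2 k + V3 k + V4 k" V5 A]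
      tri[of "\<lambda>k. V1 k + V2 k + V3 k" V4 A]
      tri[of "\<lambda>k. V1 k + V2 k" V3 A] tri[of V1 V2 A] by linarith
  also have "\<dots> \<le> N + N + N + N + N + sqrt (real K) * N"
  proof -
    have 1: "L2_set V1 A \<le> N"
    proof -
      have "L2_set V1 A \<le> \<bar>d 0\<bar>"
        by (rule bnd1[where u="\<lambda>k. if k = 0 then 1 else 0"])
           (use Sb in \<open>auto simp: V1_def A_def abs_mult mult_left_le\<close>)
      thus ?thesis using dN[of 0] by simp
    qed
    have 2: "L2_set V2 A \<le> N"
    proof -
      have "L2_set V2 A \<le> \<bar>d 0\<bar>"
      proof (rule bnd1[where u="\<lambda>k. if k = 0 then 0 else mu / real K + (1 - mu) * x k"])
        fix k assume k: "k \<in> A"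
        show "0 \<le> (if k = 0 then 0 else mu / real K + (1 - mu) * x k)"
          using k xs(2)[of k] assms(3,4) by (auto simp: A_def)
        show "\<bar>V2 k\<bar> \<le> \<bar>d 0\<bar> * (if k = 0 then 0 else mu / real K + (1 - mu) * x k)"
        proof (cases "k = 0")
          case False
          have c: "0 \<le> mu / real K + (1 - mu) * x k" using k xs(2)[of k] assms(3,4) by (auto simp: A_def)
          have "\<bar>p k\<bar> \<le> 1" using pb[of k] False k by (auto simp: A_def)
          hence "\<bar>p k\<bar> * (\<bar>d 0\<bar> * (mu / real K + (1 - mu) * x k))
              \<le> 1 * (\<bar>d 0\<bar> * (mu / real K + (1 - mu) * x k))"
            by (intro mult_right_mono) (use c in auto)
          thus ?thesis using False c by (simp add: V2_def abs_mult)
        qed (simp add: V2_def)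
      next
        have "(\<Sum>k\<in>A. (if k = 0 then 0 else mu / real K + (1 - mu) * x k))
            = (\<Sum>k=1..K. mu / real K + (1 - mu) * x k)"
          unfolding A_def by (subst split0) simp
        also have "\<dots> = mu + (1 - mu) * (1 - x 0)"
          using Kpos x1 by (simp add: sum.distrib flip: sum_distrib_left)
        also have "\<dots> \<le> 1"
        proof -
          have "(1 - mu) * (1 - x 0) \<le> (1 - mu) * 1"
            using xs(2)[of 0] assms(4) by (intro mult_left_mono) auto
          thus ?thesis by simp
        qed
        finally show "(\<Sum>k\<in>A. (if k = 0 then 0 else mu / real K + (1 - mu) * x k)) \<le> 1" .
      qed simp
      thus ?thesis using dN[of 0] by simp
    qed
    have 3: "L2_set V3 A \<le> N"
    proof -
      have "L2_set V3 A \<le> L2_set d A"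
      proof (rule bnd2)
        fix k assume k: "k \<in> A"
        show "\<bar>V3 k\<bar> \<le> \<bar>d k\<bar>"
        proof (cases "k = 0")
          case False
          have "\<bar>p k * y 0 * (1 - mu)\<bar> \<le> 1"
            using pb[of k] False k ys(2)[of 0] yle[of 0] assms(3,4)
            by (auto simp: A_def abs_mult intro!: mult_le_one)
          thus ?thesis using False by (simp add: V3_def abs_mult mult_left_le_one_le)
        qed (simp add: V3_def)
      qed
      thus ?thesis by (simp add: N_def)
    qed
    have 4: "L2_set V4 A \<le> N"
    proof -
      have "L2_set V4 A \<le> L2_set d A"
      proof (rule bnd2)
        fix k assume k: "k \<in> A"
        show "\<bar>V4 k\<bar> \<le> \<bar>d k\<bar>"
        proof (cases "k = 0")
          case False
          have "\<bar>R k\<bar> \<le> 1" using Rb[of k] False k by (auto simp: A_def)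
          thus ?thesis using False by (simp add: V4_def abs_mult mult_left_le)
        qed (simp add: V4_def)
      qed
      thus ?thesis by (simp add: N_def)
    qed
    have 5: "L2_set V5 A \<le> N"
    proof -
      have "L2_set V5 A \<le> \<bar>d 0\<bar>"
      proof (rule bnd1[where u=y])
        fix k assume k: "k \<in> A"
        show "0 \<le> y k" using ys(2)[of k] k by (auto simp: A_def)
        show "\<bar>V5 k\<bar> \<le> \<bar>d 0\<bar> * y k"
        proof (cases "k = 0")
          case False
          have yk: "0 \<le> y k" using ys(2)[of k] k by (auto simp: A_def)
          have "\<bar>p k\<bar> \<le> 1" using pb[of k] False k by (auto simp: A_def)
          hence "\<bar>p k\<bar> * (y k * \<bar>d 0\<bar>) \<le> 1 * (y k * \<bar>d 0\<bar>)"
            by (intro mult_right_mono) (use yk in auto)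
          thus ?thesis using False yk by (simp add: V5_def abs_mult algebra_simps)
        qed (use ys(2)[of 0] in \<open>simp add: V5_def\<close>)
      qed (use ys(1) in \<open>auto simp: A_def\<close>)
      thus ?thesis using dN[of 0] by simp
    qed
    have 6: "L2_set V6 A \<le> sqrt (real K) * N"
    proof -
      have "L2_set V6 A \<le> \<bar>P\<bar>"
      proof (rule bnd1[where u=y])
        fix k assume k: "k \<in> A"
        show "0 \<le> y k" using ys(2)[of k] k by (auto simp: A_def)
        show "\<bar>V6 k\<bar> \<le> \<bar>P\<bar> * y k"
        proof (cases "k = 0")
          case True
          have y0: "0 \<le> y 0" using ys(2) by auto
          have "(1 - mu) * (y 0 * \<bar>P\<bar>) \<le> 1 * (y 0 * \<bar>P\<bar>)"
            by (intro mult_right_mono) (use assms(3,4) y0 in auto)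
          moreover have "\<bar>V6 k\<bar> = (1 - mu) * (y 0 * \<bar>P\<bar>)"
            using True assms(3,4) y0 by (simp add: V6_def abs_mult)
          ultimately show ?thesis using True by (simp add: mult.commute)
        next
          case False
          have yk: "0 \<le> y k" using ys(2)[of k] k by (auto simp: A_def)
          thus ?thesis using False by (simp add: V6_def abs_mult algebra_simps)
        qed
      qed (use ys(1) in \<open>auto simp: A_def\<close>)
      thus ?thesis using PN by simp
    qed
    show ?thesis using 1 2 3 4 5 6 by linarith
  qed
  finally have "L2_set (\<lambda>k. V1 k + V2 k + V3 k + V4 k + V5 k + V6 k) A \<le> (5 + sqrt (real K)) * N"
    by (simp add: algebra_simps)
  hence "enorm K (\<lambda>k. Fmap K lam mu p x k - Fmap K lam mu p y k) \<le> lam * ((5 + sqrt (real K)) * N)"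
    unfolding E2 using assms(2) by (intro mult_left_mono) auto
  moreover have "N = enorm K (\<lambda>k. x k - y k)" by (simp add: N_def enorm_def L2_set_def A_def d_def)
  ultimately show ?thesis by (simp add: mult.assoc)
qed

end
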